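(* Let $T$ be a torus, $X$ a finite $T$-CW complex, $(t,x)\in\mathcal X^+\times\mathfrak t_{\mathbb C}$ and $a=\zeta_{T,t}(x)\in E_{T,t}$. Evaluation of loops at $(0,0)\in\mathbb T^2$ restricts to a homeomorphism \[ ev_{t,x}:L^2X^{t,x}\xrightarrow{\cong}X^a, \] natural in $X$ and equivariant with respect to the homomorphism $\nu:T/T(a)\to(\mathbb T^2\times T)/T(t,x)$ induced by the inclusion $T\hookrightarrow\mathbb T^2\times T$, $u\mapsto(0,u)$ (i.e. $ev_{t,x}(\nu(g)\cdot\gamma)=g\cdot ev_{t,x}(\gamma)$).
   Context: $\mathbb T=\mathbb R/\mathbb Z$, $T$ torus, $\check T=\mathrm{Hom}(\mathbb T,T)$, $\mathfrak t=\check T\otimes\mathbb R$, $\mathfrak t_{\mathbb C}=\check T\otimes\mathbb C$, $\pi:\mathfrak t\to T$ the quotient. $\mathcal X^+=\{(t_1,t_2)\in\mathbb C^2:\mathbb Rt_1+\mathbb Rt_2=\mathbb C,\ \mathrm{Im}(t_1/t_2)>0\}$, $E_t=\mathbb C/(\mathbb Zt_1+\mathbb Zt_2)$, $E_{T,t}=\check T\otimes E_t$, $\zeta_{T,t}:\mathfrak t_{\mathbb C}\to E_{T,t}$ the quotient. For $a\in E_{T,t}$, $T(a)$ is the intersection of all closed $H\subset T$ with $a\in\mathrm{Hom}(\hat H,E_t)\subset E_{T,t}$ (explicitly, writing $x=x_1t_1+x_2t_2$ with $x_i\in\mathfrak t$, $T(a)$ is generated by $\pi(x_1),\pi(x_2)$),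 and $X^a$ is its fixed point set. $L^2X=\mathrm{Map}(\mathbb T^2,X)$ with $\mathbb T^2\times T$ acting by $((r,u)\cdot\gamma)(s)=u\cdot\gamma(s-r)$. $T(t,x)$ is the intersection of all closed $K\subset\mathbb T^2\times T$ with $(t,x)\in\mathrm{Lie}(K)\otimes\mathbb C\subset\mathbb C^2\times\mathfrak t_{\mathbb C}$, and $L^2X^{t,x}$ is its fixed point set; one has $T(a)=T\cap T(t,x)$, so $\nu$ is well defined. $L^2X^{t,x}$ carries the induced action of $(\mathbb T^2\times T)/T(t,x)$ and $X^a$ that of $T/T(a)$. *)

theory Defs
  imports "HOL-Analysis.Analysis"
begin

text \<open>The torus T of rank CARD('n) is modelled as
  T = \<t>/\<check>T with \<t> = real^'n and cocharacter lattice \<check>T = \<int>^'n; the quotient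
  map \<pi> : \<t> \<rightarrow> T is implicit: an element of T is represented by any lift
  v :: real^'n.  \<t>_\<complex> = complex^'n.  The 2-torus \<T>^2 is (real \<times> real)/\<int>^2.
  A closed subgroup of a torus is represented by its (closed) preimage in
  the Lie algebra, i.e. a closed additive subgroup containing the lattice.\<close>

definition lat :: "(real^'n) set" where
  "lat = {v. \<forall>i. v $ i \<in> \<int>}"

definition lat2 :: "(real \<times> real) set" where
  "lat2 = {s. fst s \<in> \<int> \<and> snd s \<in> \<int>}"

definition closed_subgrp_T :: "(real^'n) set \<Rightarrow> bool" where
  "closed_subgrp_T H \<longleftrightarrow> closed H \<and> 0 \<in> H \<and> (\<forall>u\<in>H. \<forall>v\<in>H. u + v \<in> H \<and> - u \<in> H)
      \<and> lat \<subseteq> H"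

definition closed_subgrp_T2T :: "((real \<times> real) \<times> (real^'n)) set \<Rightarrow> bool" where
  "closed_subgrp_T2T K \<longleftrightarrow> closed K \<and> 0 \<in> K \<and> (\<forall>u\<in>K. \<forall>v\<in>K. u + v \<in> K \<and> - u \<in> K)
      \<and> lat2 \<times> lat \<subseteq> K"

definition lie_alg :: "((real \<times> real) \<times> (real^'n)) set \<Rightarrow> ((real \<times> real) \<times> (real^'n)) set" where
  "lie_alg K = {v. \<forall>r::real. r *\<^sub>R v \<in> K}"

text \<open>Membership of (t,x) \<in> \<complex>^2 \<times> \<t>_\<complex> in Lie(K) \<otimes> \<complex> = Lie(K) + i Lie(K).\<close>
definition in_lie_cplx :: "((real \<times> real) \<times> (real^'n)) set \<Rightarrow> complex \<times> complex \<Rightarrow> complex^'n \<Rightarrow> bool" where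
  "in_lie_cplx K t x \<longleftrightarrow> (\<exists>a\<in>lie_alg K. \<exists>b\<in>lie_alg K.
      fst t = Complex (fst (fst a)) (fst (fst b)) \<and> snd t = Complex (snd (fst a)) (snd (fst b))
      \<and> (\<forall>i. x $ i = Complex (snd a $ i) (snd b $ i)))"

definition Ttx :: "complex \<times> complex \<Rightarrow> complex^'n \<Rightarrow> ((real \<times> real) \<times> (real^'n)) set" where
  "Ttx t x = \<Inter> {K. closed_subgrp_T2T K \<and> in_lie_cplx K t x}"

definition Xplus :: "(complex \<times> complex) set" where
  "Xplus = {t. (\<forall>z. \<exists>a b::real. z = of_real a * fst t + of_real b * snd t) \<and> Im (fst t / snd t) > 0}"

text \<open>E_{T,t} = \<check>T \<otimes> E_t = \<t>_\<complex> / (\<check>T t1 + \<check>T t2); \<zeta>_{T,t}(x) is the class of x.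
  Characters of T are m \<in> \<int>^'n, \<chi>_m(\<pi> v) = m \<bullet> v mod \<int>.  The class a = \<zeta>_{T,t}(x),
  viewed as the homomorphism \<hat>T \<rightarrow> E_t, m \<mapsto> [m \<bullet> x], lies in Hom(\<hat>H, E_t) iff it
  vanishes on the characters that are trivial on H.\<close>
definition in_Hom_hatH :: "(real^'n) set \<Rightarrow> complex \<times> complex \<Rightarrow> complex^'n \<Rightarrow> bool" where
  "in_Hom_hatH H t x \<longleftrightarrow> (\<forall>m \<in> lat. (\<forall>h\<in>H. m \<bullet> h \<in> \<int>) \<longrightarrow>
      (\<exists>p\<in>\<int>. \<exists>q\<in>\<int>. (\<Sum>i\<in>UNIV. of_real (m $ i) * x $ i) = of_real p * fst t + of_real q * snd t))"

definition Ta :: "complex \<times> complex \<Rightarrow> complex^'n \<Rightarrow> (real^'n) set" where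
  "Ta t x = \<Inter> {H. closed_subgrp_T H \<and> in_Hom_hatH H t x}"

definition T_space :: "'a topology \<Rightarrow> (real^'n \<Rightarrow> 'a \<Rightarrow> 'a) \<Rightarrow> bool" where
  "T_space X act \<longleftrightarrow>
     continuous_map (prod_topology euclidean X) X (\<lambda>(v, p). act v p)
     \<and> (\<forall>p\<in>topspace X. act 0 p = p)
     \<and> (\<forall>v w. \<forall>p\<in>topspace X. act (v + w) p = act v (act w p))
     \<and> (\<forall>m\<in>lat. \<forall>p\<in>topspace X. act m p = p)"

definition disc :: "nat \<Rightarrow> (nat \<Rightarrow> real) set" where
  "disc k = {d \<in> topspace (Euclidean_space k). (\<Sum>i<k. (d i)\<^sup>2) \<le> 1}"

definition disc_bdry :: "nat \<Rightarrow> (nat \<Rightarrow> real) set" where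
  "disc_bdry k = {d \<in> topspace (Euclidean_space k). (\<Sum>i<k. (d i)\<^sup>2) = 1}"

definition disc_top :: "nat \<Rightarrow> (nat \<Rightarrow> real) topology" where
  "disc_top k = subtopology (Euclidean_space k) (disc k)"

text \<open>B \<subseteq> topspace X is obtained from A by attaching finitely many equivariant
  k-cells T/H_i \<times> D^k along T-maps T/H_i \<times> S^{k-1} \<rightarrow> A.  The i-th cell is given by
  its characteristic map (v,d) \<mapsto> \<Phi> i v d on \<t> \<times> D^k, which is T-equivariant and
  factors through T/H_i \<times> D^k; B carries the pushout (quotient) topology.\<close>
definition attach_cells ::
  "'a topology \<Rightarrow> (real^'n \<Rightarrow> 'a \<Rightarrow> 'a) \<Rightarrow> nat \<Rightarrow> 'a set \<Rightarrow> 'a set \<Rightarrow> bool" where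
  "attach_cells X act k A B \<longleftrightarrow> A \<subseteq> B \<and> B \<subseteq> topspace X \<and>
     (\<exists>(m::nat) (H :: nat \<Rightarrow> (real^'n) set) (\<Phi> :: nat \<Rightarrow> real^'n \<Rightarrow> (nat \<Rightarrow> real) \<Rightarrow> 'a).
        (\<forall>i<m. closed_subgrp_T (H i))
      \<and> (\<forall>i<m. continuous_map (prod_topology euclidean (disc_top k)) (subtopology X B)
                (\<lambda>(v, d). \<Phi> i v d))
      \<and> (\<forall>i<m. \<forall>v. \<forall>d\<in>disc k. \<Phi> i v d = act v (\<Phi> i 0 d))
      \<and> (\<forall>i<m. \<forall>h\<in>H i. \<forall>d\<in>disc k. \<Phi> i h d = \<Phi> i 0 d)
      \<and> (\<forall>i<m. \<forall>v. \<forall>d\<in>disc_bdry k. \<Phi> i v d \<in> A)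
      \<and> B = A \<union> (\<Union>i<m. (\<lambda>(v, d). \<Phi> i v d) ` (UNIV \<times> (disc k - disc_bdry k)))
      \<and> (\<forall>i<m. \<forall>v. \<forall>d\<in>disc k - disc_bdry k. \<Phi> i v d \<notin> A)
      \<and> (\<forall>i<m. \<forall>j<m. \<forall>v v'. \<forall>d\<in>disc k - disc_bdry k. \<forall>d'\<in>disc k - disc_bdry k.
            \<Phi> i v d = \<Phi> j v' d' \<longrightarrow> i = j \<and> d = d' \<and> v - v' \<in> H i)
      \<and> (\<forall>C. C \<subseteq> B \<longrightarrow>
            (closedin (subtopology X B) C \<longleftrightarrow>
               closedin (subtopology X A) (C \<inter> A)
             \<and> (\<forall>i<m. closedin (prod_topology euclidean (disc_top k))
                        {(v, d). d \<in> disc k \<and> \<Phi> i v d \<in> C}))))"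

text \<open>A finite T-CW complex: finitely many skeleta, each obtained from the previous
  one by attaching finitely many equivariant cells.  Sk 0 is the (-1)-skeleton,
  Sk (Suc k) the k-skeleton.\<close>
definition finite_T_CW :: "'a topology \<Rightarrow> (real^'n \<Rightarrow> 'a \<Rightarrow> 'a) \<Rightarrow> bool" where
  "finite_T_CW X act \<longleftrightarrow> T_space X act \<and>
     (\<exists>(N::nat) (Sk :: nat \<Rightarrow> 'a set). Sk 0 = {} \<and> Sk N = topspace X \<and>
        (\<forall>k<N. attach_cells X act k (Sk k) (Sk (Suc k))))"

text \<open>Free double loop space L^2X = Map(\<T>^2, X): continuous \<int>^2-periodic maps
  \<real>^2 \<rightarrow> X, with the compact-open topology.\<close>
definition L2 :: "'a topology \<Rightarrow> ((real \<times> real) \<Rightarrow> 'a) set" where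
  "L2 X = {\<gamma>. continuous_map euclidean X \<gamma> \<and> (\<forall>s. \<forall>m\<in>lat2. \<gamma> (s + m) = \<gamma> s)}"

definition L2_top :: "'a topology \<Rightarrow> ((real \<times> real) \<Rightarrow> 'a) topology" where
  "L2_top X = subtopology
     (topology_generated_by {{\<gamma>. \<gamma> ` K \<subseteq> U} | K U. compact K \<and> openin X U}) (L2 X)"

definition L2_act :: "(real^'n \<Rightarrow> 'a \<Rightarrow> 'a) \<Rightarrow> (real \<times> real) \<times> (real^'n)
     \<Rightarrow> ((real \<times> real) \<Rightarrow> 'a) \<Rightarrow> ((real \<times> real) \<Rightarrow> 'a)" where
  "L2_act act g \<gamma> = (\<lambda>s. act (snd g) (\<gamma> (s - fst g)))"

definition L2_fix :: "'a topology \<Rightarrow> (real^'n \<Rightarrow> 'a \<Rightarrow> 'a) \<Rightarrow> complex \<times> complex \<Rightarrow> complex^'n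
     \<Rightarrow> ((real \<times> real) \<Rightarrow> 'a) set" where
  "L2_fix X act t x = {\<gamma> \<in> L2 X. \<forall>g\<in>Ttx t x. L2_act act g \<gamma> = \<gamma>}"

definition X_fix :: "'a topology \<Rightarrow> (real^'n \<Rightarrow> 'a \<Rightarrow> 'a) \<Rightarrow> complex \<times> complex \<Rightarrow> complex^'n
     \<Rightarrow> 'a set" where
  "X_fix X act t x = {p \<in> topspace X. \<forall>u\<in>Ta t x. act u p = p}"

definition ev0 :: "((real \<times> real) \<Rightarrow> 'a) \<Rightarrow> 'a" where
  "ev0 \<gamma> = \<gamma> (0, 0)"

end

theory Submission
  imports Defs "HOL-Analysis.Analysis"
begin

definition grp :: "'a::real_vector set \<Rightarrow> bool" where
  "grp H \<longleftrightarrow> 0 \<in> H \<and> (\<forall>u\<in>H. \<forall>v\<in>H. u + v \<in> H \<and> - u \<in> H)"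

lemma grp_add: "grp H \<Longrightarrow> u \<in> H \<Longrightarrow> v \<in> H \<Longrightarrow> u + v \<in> H"
  and grp_neg: "grp H \<Longrightarrow> u \<in> H \<Longrightarrow> - u \<in> H"
  and grp_zero: "grp H \<Longrightarrow> 0 \<in> H"
  by (auto simp: grp_def)

lemma grp_diff: "grp H \<Longrightarrow> u \<in> H \<Longrightarrow> v \<in> H \<Longrightarrow> u - v \<in> H"
  using grp_add[of H u "-v"] grp_neg[of H v] by simp

lemma grp_nat_mult: "grp H \<Longrightarrow> v \<in> H \<Longrightarrow> real n *\<^sub>R v \<in> H"
  by (induction n) (auto simp: grp_zero grp_add algebra_simps)

lemma grp_int_mult: assumes "grp H" "v \<in> H" "c \<in> \<int>" shows "c *\<^sub>R v \<in> H"
proof -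
  obtain k where k: "c = of_int k" using assms(3) Ints_cases by blast
  show ?thesis
  proof (cases "k \<ge> 0")
    case True
    then have "c = real (nat k)" using k by simp
    then show ?thesis using grp_nat_mult assms by metis
  next
    case False
    then have "c = - real (nat (-k))" using k by simp
    then show ?thesis using grp_nat_mult[OF assms(1,2), of "nat (-k)"] grp_neg[OF assms(1)] by simp
  qed
qed

lemma grp_sum: "grp H \<Longrightarrow> (\<And>b. b \<in> B \<Longrightarrow> f b \<in> H) \<Longrightarrow> sum f B \<in> H"
  by (induction B rule: infinite_finite_induct) (auto simp: grp_zero grp_add)

lemma grp_zspan: "grp H \<Longrightarrow> B \<subseteq> H \<Longrightarrow> (\<forall>b\<in>B. c b \<in> \<int>) \<Longrightarrow> (\<Sum>b\<in>B. c b *\<^sub>R b) \<in> H"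
  by (rule grp_sum) (auto intro: grp_int_mult)

definition proj :: "'a::real_inner \<Rightarrow> 'a \<Rightarrow> 'a" where
  "proj w v = v - ((v \<bullet> w) / (w \<bullet> w)) *\<^sub>R w"

lemma linear_proj: "linear (proj w)"
  by (rule linearI) (auto simp: proj_def inner_add_left algebra_simps add_divide_distrib)

lemma proj_orth: "w \<noteq> 0 \<Longrightarrow> proj w v \<bullet> w = 0"
  by (simp add: proj_def inner_diff_left)

lemma proj_self: "proj w w = 0"
  by (cases "w = 0") (auto simp: proj_def)

lemma proj_decomp: "v = proj w v + ((v \<bullet> w) / (w \<bullet> w)) *\<^sub>R w"
  by (simp add: proj_def)

lemma dim_less:
  fixes H S :: "'a::euclidean_space set"
  assumes "S \<subseteq> span H" "w \<in> span H" "w \<noteq> 0" "\<forall>v\<in>S. v \<bullet> w = 0"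
  shows "dim S < dim H"
proof -
  have sub: "subspace {v::'a. v \<bullet> w = 0}"
    by (auto simp: subspace_def inner_add_left)
  have "span S \<subseteq> {v. v \<bullet> w = 0}" using assms(4) by (intro span_minimal sub) auto
  then have "w \<notin> span S" using assms(3) by auto
  moreover have "span S \<subseteq> span H" using assms(1) by (metis span_mono span_span)
  moreover have "w \<in> span H" by fact
  ultimately have "span S \<subset> span H" by blast
  then show ?thesis by (rule dim_psubset)
qed

lemma discrete_finite:
  fixes H :: "'a::euclidean_space set"
  assumes "grp H" "e > 0" "\<forall>h\<in>H. h \<noteq> 0 \<longrightarrow> e \<le> norm h"
  shows "finite (H \<inter> cball 0 R)"
proof (rule ccontr)
  assume inf: "infinite (H \<inter> cball 0 R)"
  obtain x where "x islimpt (H \<inter> cball 0 R)"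
    using compact_eq_Bolzano_Weierstrass[of "cball (0::'a) R"] inf by auto
  then obtain a where a: "a \<in> H" "a \<noteq> x" "dist a x < e/2"
    using assms(2) unfolding islimpt_approachable by (metis IntD1 half_gt_zero)
  then have "dist a x > 0" by simp
  then obtain b where b: "b \<in> H" "b \<noteq> x" "dist b x < dist a x"
    using \<open>x islimpt _\<close> unfolding islimpt_approachable by (metis IntD1)
  have "a - b \<in> H" using a b assms(1) grp_diff by blast
  moreover have "a - b \<noteq> 0" using b by auto
  moreover have "norm (a - b) < e"
    using a b dist_triangle2[of a b x] by (simp add: dist_norm)
  ultimately show False using assms(3) by force
qed

lemma line_or_discrete:
  fixes H :: "'a::euclidean_space set"
  assumes cl: "closed H" and g: "grp H"
  shows "(\<exists>w. w \<noteq> 0 \<and> (\<forall>r. r *\<^sub>R w \<in> H)) \<or> (\<exists>e>0. \<forall>h\<in>H. h \<noteq> 0 \<longrightarrow> e \<le> norm h)"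
proof (rule disjCI)
  assume nd: "\<not> (\<exists>e>0. \<forall>h\<in>H. h \<noteq> 0 \<longrightarrow> e \<le> norm h)"
  have "\<forall>k::nat. \<exists>h. h \<in> H \<and> h \<noteq> 0 \<and> norm h < 1 / Suc k"
  proof
    fix k :: nat
    have "(1::real) / Suc k > 0" by simp
    with nd have "\<not> (\<forall>h\<in>H. h \<noteq> 0 \<longrightarrow> 1 / Suc k \<le> norm h)" by blast
    then show "\<exists>h. h \<in> H \<and> h \<noteq> 0 \<and> norm h < 1 / Suc k" by (auto simp: not_le)
  qed
  then obtain h where h: "\<And>k. h k \<in> H" "\<And>k. h k \<noteq> 0" "\<And>k. norm (h k) < 1 / Suc k"
    by metis
  define u where "u k = (1 / norm (h k)) *\<^sub>R h k" for k
  have u: "\<forall>k. u k \<in> sphere 0 1" using h(2) by (simp add: u_def)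
  obtain l r where l: "l \<in> sphere 0 1" "strict_mono r" "(u \<circ> r) \<longlonglongrightarrow> l"
    using seq_compactE[OF compact_imp_seq_compact[OF compact_sphere] u] by blast
  have h0: "h \<longlonglongrightarrow> 0"
  proof (rule Lim_null_comparison[where g="\<lambda>k. 1 / Suc k"])
    show "\<forall>\<^sub>F k in sequentially. norm (h k) \<le> 1 / Suc k" using h(3) by (simp add: less_imp_le)
    show "(\<lambda>k. 1 / real (Suc k)) \<longlonglongrightarrow> 0"
      using LIMSEQ_inverse_real_of_nat by (simp add: inverse_eq_divide)
  qed
  have hr: "(\<lambda>k. h (r k)) \<longlonglongrightarrow> 0"
    using LIMSEQ_subseq_LIMSEQ[OF h0 l(2)] by (simp add: o_def)
  have line: "c *\<^sub>R l \<in> H" for c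
  proof -
    define a where "a k = c / norm (h (r k))" for k
    define z where "z k = of_int \<lfloor>a k\<rfloor> *\<^sub>R h (r k)" for k
    have zH: "\<forall>k. z k \<in> H" by (simp add: z_def grp_int_mult[OF g h(1)])
    have zeq: "z k = c *\<^sub>R u (r k) - frac (a k) *\<^sub>R h (r k)" for k
    proof -
      have "of_int \<lfloor>a k\<rfloor> = a k - frac (a k)" by (simp add: frac_def)
      then have "z k = a k *\<^sub>R h (r k) - frac (a k) *\<^sub>R h (r k)" by (simp add: z_def scaleR_diff_left)
      moreover have "a k *\<^sub>R h (r k) = c *\<^sub>R u (r k)" by (simp add: a_def u_def)
      ultimately show ?thesis by simp
    qed
    have t1: "(\<lambda>k. c *\<^sub>R u (r k)) \<longlonglongrightarrow> c *\<^sub>R l"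
      using l(3) by (intro tendsto_scaleR tendsto_const) (simp add: o_def)
    have t2: "(\<lambda>k. frac (a k) *\<^sub>R h (r k)) \<longlonglongrightarrow> 0"
    proof (rule Lim_null_comparison[where g="\<lambda>k. norm (h (r k))"])
      show "\<forall>\<^sub>F k in sequentially. norm (frac (a k) *\<^sub>R h (r k)) \<le> norm (h (r k))"
      proof (intro always_eventually allI)
        fix k
        have "norm (frac (a k) *\<^sub>R h (r k)) = frac (a k) * norm (h (r k))" by simp
        also have "\<dots> \<le> 1 * norm (h (r k))"
          by (intro mult_right_mono) (auto simp: less_imp_le[OF frac_lt_1])
        finally show "norm (frac (a k) *\<^sub>R h (r k)) \<le> norm (h (r k))" by simp
      qed
      show "(\<lambda>k. norm (h (r k))) \<longlonglongrightarrow> 0" using hr by (simp add: tendsto_norm_zero)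
    qed
    have "z \<longlonglongrightarrow> c *\<^sub>R l - 0"
      unfolding zeq[abs_def] by (intro tendsto_diff t1 t2)
    then show ?thesis using closed_sequentially[OF cl] zH by auto
  qed
  moreover have "l \<noteq> 0" using l(1) by auto
  ultimately show "\<exists>w. w \<noteq> 0 \<and> (\<forall>r. r *\<^sub>R w \<in> H)" by blast
qed

lemma discrete_basis:
  fixes H :: "'a::euclidean_space set"
  assumes "grp H" "e > 0" "\<forall>h\<in>H. h \<noteq> 0 \<longrightarrow> e \<le> norm h"
  shows "\<exists>B. finite B \<and> independent B \<and> B \<subseteq> H \<and> H = {\<Sum>b\<in>B. c b *\<^sub>R b | c. \<forall>b\<in>B. c b \<in> \<int>}"
  using assms
proof (induction "dim H" arbitrary: H e rule: less_induct)
  case less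
  note g = less.prems(1) and e = less.prems(2) and sep = less.prems(3)
  show ?case
  proof (cases "H = {0}")
    case True
    then show ?thesis by (intro exI[of _ "{}"]) (auto simp: independent_empty)
  next
    case False
    then obtain h0 where h0: "h0 \<in> H" "h0 \<noteq> 0" using grp_zero[OF g] by blast
    define L where "L = {c::real. c *\<^sub>R h0 \<in> H \<and> 0 < c \<and> c \<le> 1}"
    have "(\<lambda>c. c *\<^sub>R h0) ` L \<subseteq> H \<inter> cball 0 (norm h0)"
      by (auto simp: L_def intro!: mult_left_le_one_le)
    then have "finite ((\<lambda>c. c *\<^sub>R h0) ` L)" using discrete_finite[OF g e sep] finite_subset by blast
    moreover have "inj_on (\<lambda>c. c *\<^sub>R h0) L" using h0(2) by (auto intro!: inj_onI)
    ultimately have finL: "finite L" using finite_imageD by blast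
    have "1 \<in> L" using h0 by (simp add: L_def)
    define c0 where "c0 = Min L"
    have c0L: "c0 \<in> L" using finL \<open>1 \<in> L\<close> unfolding c0_def by (metis Min_in empty_iff)
    have c0min: "\<And>c. c \<in> L \<Longrightarrow> c0 \<le> c" using finL by (simp add: c0_def)
    define h where "h = c0 *\<^sub>R h0"
    have hH: "h \<in> H" and hnz: "h \<noteq> 0" using c0L h0 by (auto simp: L_def h_def)
    have prim: "c \<in> \<int>" if ch: "c *\<^sub>R h \<in> H" for c
    proof (rule ccontr)
      assume "c \<notin> \<int>"
      then have f: "0 < frac c" "frac c < 1" using frac_lt_1[of c] frac_ge_0[of c] frac_eq_0_iff[of c]
        by (auto simp: less_le)
      have "frac c *\<^sub>R h = c *\<^sub>R h - of_int \<lfloor>c\<rfloor> *\<^sub>R h" by (simp add: frac_def scaleR_diff_left)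
      also have "\<dots> \<in> H" using grp_diff[OF g ch grp_int_mult[OF g hH]] by simp
      finally have "(frac c * c0) *\<^sub>R h0 \<in> H" by (simp add: h_def)
      moreover have "0 < frac c * c0" "frac c * c0 < c0" "c0 \<le> 1" using f c0L by (auto simp: L_def)
      ultimately have "frac c * c0 \<in> L" by (simp add: L_def)
      then show False using c0min \<open>frac c * c0 < c0\<close> by force
    qed
    define Q where "Q = proj h"
    have linQ: "linear Q" by (simp add: Q_def linear_proj)
    have Qh: "Q h = 0" by (simp add: Q_def proj_self)
    define H' where "H' = Q ` H"
    have g': "grp H'" unfolding grp_def H'_def
    proof (intro conjI ballI)
      show "0 \<in> Q ` H" using grp_zero[OF g] linear_0[OF linQ] by (metis image_eqI)
      fix u v assume "u \<in> Q ` H" "v \<in> Q ` H"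
      then obtain a b where "a \<in> H" "b \<in> H" "u = Q a" "v = Q b" by auto
      then show "u + v \<in> Q ` H" "- u \<in> Q ` H"
        using grp_add[OF g] grp_neg[OF g] linear_add[OF linQ] linear_neg[OF linQ] by (metis image_eqI)+
    qed
    define F where "F = H \<inter> cball 0 (1 + norm h)"
    have finF: "finite F" using discrete_finite[OF g e sep] by (simp add: F_def)
    define E where "E = insert 1 ((\<lambda>d. norm (Q d)) ` {d\<in>F. Q d \<noteq> 0})"
    define e' where "e' = Min E"
    have finE: "finite E" by (simp add: E_def finF)
    have e'pos: "e' > 0"
    proof -
      have "e' \<in> E" using finE unfolding e'_def by (intro Min_in) (auto simp: E_def)
      then show ?thesis by (auto simp: E_def)
    qed
    have sep': "\<forall>q\<in>H'. q \<noteq> 0 \<longrightarrow> e' \<le> norm q"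
    proof (intro ballI impI)
      fix q assume "q \<in> H'" "q \<noteq> 0"
      then obtain d where d: "d \<in> H" "q = Q d" by (auto simp: H'_def)
      show "e' \<le> norm q"
      proof (cases "norm q \<ge> 1")
        case True
        have "e' \<le> 1" using finE by (simp add: e'_def E_def)
        then show ?thesis using True by simp
      next
        case False
        define s where "s = (d \<bullet> h) / (h \<bullet> h)"
        define d' where "d' = d - of_int \<lfloor>s\<rfloor> *\<^sub>R h"
        have d'H: "d' \<in> H" unfolding d'_def by (intro grp_diff[OF g d(1)] grp_int_mult[OF g hH]) simp
        have Qd': "Q d' = q" using d(2) by (simp add: d'_def linear_diff[OF linQ] linear_scale[OF linQ] Qh)
        have "d = Q d + s *\<^sub>R h" using proj_decomp[of d h] by (simp add: Q_def s_def)
        then have "d' = Q d + frac s *\<^sub>R h" by (simp add: d'_def frac_def algebra_simps)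
        then have "norm d' \<le> norm (Q d) + norm (frac s *\<^sub>R h)" by (metis norm_triangle_ineq)
        also have "norm (frac s *\<^sub>R h) = frac s * norm h" by simp
        also have "frac s * norm h \<le> 1 * norm h" by (intro mult_right_mono) (auto simp: less_imp_le[OF frac_lt_1])
        finally have "norm d' \<le> 1 + norm h" using False d(2) by simp
        then have "d' \<in> F" using d'H by (simp add: F_def)
        then have "norm q \<in> E" using Qd' \<open>q \<noteq> 0\<close> unfolding E_def by (metis (mono_tags, lifting) image_eqI insertCI mem_Collect_eq)
        then show ?thesis using finE by (simp add: e'_def)
      qed
    qed
    have dimlt: "dim H' < dim H"
    proof (rule dim_less[where w=h])
      show "H' \<subseteq> span H"
      proof
        fix q assume "q \<in> H'"
        then obtain d where d: "d \<in> H" "q = Q d" by (auto simp: H'_def)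
        then have "q = d - ((d \<bullet> h) / (h \<bullet> h)) *\<^sub>R h" by (simp add: Q_def proj_def)
        then show "q \<in> span H" using d hH by (simp add: span_diff span_scale span_base)
      qed
      show "h \<in> span H" using hH by (simp add: span_base)
      show "h \<noteq> 0" by fact
      show "\<forall>v\<in>H'. v \<bullet> h = 0" using hnz by (auto simp: H'_def Q_def proj_orth)
    qed
    obtain B' where B': "finite B'" "independent B'" "B' \<subseteq> H'" "H' = {\<Sum>b\<in>B'. c b *\<^sub>R b | c. \<forall>b\<in>B'. c b \<in> \<int>}"
      using less.hyps[OF dimlt g' e'pos sep'] by blast
    have "\<forall>q\<in>B'. \<exists>d. d \<in> H \<and> Q d = q" using B'(3) by (auto simp: H'_def)
    then have "\<exists>dl. \<forall>q\<in>B'. dl q \<in> H \<and> Q (dl q) = q" by (rule bchoice)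
    then obtain dl where dl0: "\<forall>q\<in>B'. dl q \<in> H \<and> Q (dl q) = q" by (rule exE)
    then have dl: "\<And>q. q \<in> B' \<Longrightarrow> dl q \<in> H" "\<And>q. q \<in> B' \<Longrightarrow> Q (dl q) = q" by simp_all
    have injdl: "inj_on dl B'"
    proof (rule inj_onI)
      fix a b assume "a \<in> B'" "b \<in> B'" "dl a = dl b"
      then show "a = b" using dl(2)[of a] dl(2)[of b] by metis
    qed
    have QdlB: "Q ` dl ` B' = B'"
    proof -
      have "Q ` dl ` B' = (\<lambda>q. Q (dl q)) ` B'" by (simp add: image_image)
      also have "\<dots> = (\<lambda>q. q) ` B'" by (rule image_cong) (auto simp: dl(2))
      finally show ?thesis by simp
    qed
    have injQ: "inj_on Q (dl ` B')"
    proof (rule inj_onI)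
      fix a b assume "a \<in> dl ` B'" "b \<in> dl ` B'" "Q a = Q b"
      then obtain a' b' where "a' \<in> B'" "b' \<in> B'" "a = dl a'" "b = dl b'" by blast
      then show "a = b" using dl(2)[of a'] dl(2)[of b'] \<open>Q a = Q b\<close> by simp
    qed
    have ind1: "independent (dl ` B')"
    proof (rule card_le_dim_spanning[where V = "dl ` B'"])
      show "dl ` B' \<subseteq> dl ` B'" by simp
      show "dl ` B' \<subseteq> span (dl ` B')" by (rule span_superset)
      show "finite (dl ` B')" using B'(1) by simp
      have "card (dl ` B') = card B'" using card_image[OF injdl] .
      also have "card B' = dim B'" using dim_eq_card_independent[OF B'(2)] by simp
      also have "dim B' = dim (Q ` dl ` B')" using QdlB by simp
      also have "\<dots> \<le> dim (dl ` B')" by (rule dim_image_le[OF linQ])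
      finally show "card (dl ` B') \<le> dim (dl ` B')" .
    qed
    have hnot: "h \<notin> span (dl ` B')"
    proof
      assume hs: "h \<in> span (dl ` B')"
      have "h = 0"
        by (rule linear_indep_image_lemma[OF linQ _ _ injQ hs Qh]) (use B'(1,2) QdlB in auto)
      then show False using hnz by simp
    qed
    define B where "B = insert h (dl ` B')"
    have indB: "independent B" using independent_insertI[OF hnot ind1] by (simp add: B_def)
    have hnB: "h \<notin> dl ` B'"
    proof
      assume "h \<in> dl ` B'"
      then have "h \<in> span (dl ` B')" by (rule span_base)
      with hnot show False by simp
    qed
    have BH: "B \<subseteq> H" using hH dl(1) by (auto simp: B_def)
    have finB: "finite B" using B'(1) by (simp add: B_def)
    show ?thesis
    proof (intro exI[of _ B] conjI finB indB BH)
      show "H = {\<Sum>b\<in>B. c b *\<^sub>R b | c. \<forall>b\<in>B. c b \<in> \<int>}"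
      proof
        show "{\<Sum>b\<in>B. c b *\<^sub>R b | c. \<forall>b\<in>B. c b \<in> \<int>} \<subseteq> H"
        proof (rule subsetI)
          fix d assume "d \<in> {\<Sum>b\<in>B. c b *\<^sub>R b | c. \<forall>b\<in>B. c b \<in> \<int>}"
          then obtain c where "d = (\<Sum>b\<in>B. c b *\<^sub>R b)" "\<forall>b\<in>B. c b \<in> \<int>" by blast
          then show "d \<in> H" using grp_zspan[OF g BH] by simp
        qed
        show "H \<subseteq> {\<Sum>b\<in>B. c b *\<^sub>R b | c. \<forall>b\<in>B. c b \<in> \<int>}"
        proof
          fix d assume dH: "d \<in> H"
          then have "Q d \<in> H'" by (simp add: H'_def)
          then obtain c where c: "\<forall>b\<in>B'. c b \<in> \<int>" "Q d = (\<Sum>b\<in>B'. c b *\<^sub>R b)" using B'(4) by auto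
          define d1 where "d1 = d - (\<Sum>q\<in>B'. c q *\<^sub>R dl q)"
          have d1H: "d1 \<in> H" unfolding d1_def
            by (intro grp_diff[OF g dH] grp_sum[OF g] grp_int_mult[OF g]) (use dl(1) c(1) in auto)
          have "Q d1 = Q d - (\<Sum>q\<in>B'. c q *\<^sub>R Q (dl q))"
            by (simp add: d1_def linear_diff[OF linQ] linear_sum[OF linQ] linear_scale[OF linQ])
          also have "(\<Sum>q\<in>B'. c q *\<^sub>R Q (dl q)) = (\<Sum>q\<in>B'. c q *\<^sub>R q)" using dl(2) by simp
          finally have Qd1: "Q d1 = 0" using c(2) by simp
          define s where "s = (d1 \<bullet> h) / (h \<bullet> h)"
          have d1s: "d1 = s *\<^sub>R h" using proj_decomp[of d1 h] Qd1 by (simp add: Q_def s_def)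
          have sZ: "s \<in> \<int>" using prim d1H d1s by simp
          define cc where "cc v = (if v = h then s else c (Q v))" for v
          have "(\<Sum>v\<in>B. cc v *\<^sub>R v) = cc h *\<^sub>R h + (\<Sum>v\<in>dl ` B'. cc v *\<^sub>R v)"
            using hnB B'(1) by (simp add: B_def)
          also have "(\<Sum>v\<in>dl ` B'. cc v *\<^sub>R v) = (\<Sum>q\<in>B'. cc (dl q) *\<^sub>R dl q)"
            by (rule sum.reindex[OF injdl, unfolded o_def])
          also have "\<dots> = (\<Sum>q\<in>B'. c q *\<^sub>R dl q)"
            using hnB dl(2) by (intro sum.cong) (auto simp: cc_def)
          finally have "(\<Sum>v\<in>B. cc v *\<^sub>R v) = d" using d1s by (simp add: cc_def d1_def algebra_simps)
          moreover have "\<forall>v\<in>B. cc v \<in> \<int>" using sZ c(1) dl(2) hnB by (auto simp: B_def cc_def)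
          ultimately have "\<exists>c. d = (\<Sum>b\<in>B. c b *\<^sub>R b) \<and> (\<forall>b\<in>B. c b \<in> \<int>)" by (intro exI[of _ cc]) simp
          then show "d \<in> {\<Sum>b\<in>B. c b *\<^sub>R b | c. \<forall>b\<in>B. c b \<in> \<int>}" by simp
        qed
      qed
    qed
  qed
qed

lemma half_not_Int: "(1/2::real) \<notin> \<int>"
proof
  assume "(1/2::real) \<in> \<int>"
  then have "frac (1/2::real) = 0" by simp
  moreover have "frac (1/2::real) = 1/2" by (simp add: frac_eq)
  ultimately show False by simp
qed

lemma dual_discrete:
  fixes H :: "'a::euclidean_space set"
  assumes g: "grp H" and e: "e > 0" and sep: "\<forall>h\<in>H. h \<noteq> 0 \<longrightarrow> e \<le> norm h" and y: "y \<notin> H"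
  shows "\<exists>\<phi>::'a \<Rightarrow> real. linear \<phi> \<and> (\<forall>h\<in>H. \<phi> h \<in> \<int>) \<and> \<phi> y \<notin> \<int>"
proof -
  obtain B where B: "finite B" "independent B" "B \<subseteq> H"
      "H = {\<Sum>b\<in>B. c b *\<^sub>R b | c. \<forall>b\<in>B. c b \<in> \<int>}"
    using discrete_basis[OF g e sep] by blast
  have Hc: "\<exists>c. h = (\<Sum>b\<in>B. c b *\<^sub>R b) \<and> (\<forall>b\<in>B. c b \<in> \<int>)" if "h \<in> H" for h
    using that B(4) by simp
  show ?thesis
  proof (cases "y \<in> span B")
    case False
    have ind: "independent (insert y B)" by (rule independent_insertI[OF False B(2)])
    obtain \<phi> :: "'a \<Rightarrow> real" where \<phi>: "linear \<phi>" "\<forall>x\<in>insert y B. \<phi> x = (if x = y then 1/2 else 0)"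
      using linear_independent_extend[OF ind, of "\<lambda>x. if x = y then 1/2 else (0::real)"] by (elim exE conjE) simp
    have yB: "y \<notin> B"
    proof
      assume "y \<in> B"
      then have "y \<in> span B" by (rule span_base)
      with False show False by simp
    qed
    have A: "\<phi> h \<in> \<int>" if hH: "h \<in> H" for h
    proof -
      obtain c where c: "h = (\<Sum>b\<in>B. c b *\<^sub>R b)" using Hc[OF hH] by (elim exE conjE)
      have "\<phi> h = (\<Sum>b\<in>B. c b * \<phi> b)" by (simp add: c linear_sum[OF \<phi>(1)] linear_scale[OF \<phi>(1)])
      also have "\<dots> = 0" using \<phi>(2) yB by (intro sum.neutral) auto
      finally show "\<phi> h \<in> \<int>" by simp
    qed
    have "\<phi> y = 1/2" using \<phi>(2) by simp
    then have C: "\<phi> y \<notin> \<int>" using half_not_Int by metis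
    show ?thesis using \<phi>(1) A C by blast
  next
    case True
    then obtain u where u: "y = (\<Sum>b\<in>B. u b *\<^sub>R b)" unfolding span_finite[OF B(1)] by (elim rangeE)
    have "\<not> (\<forall>b\<in>B. u b \<in> \<int>)"
    proof
      assume "\<forall>b\<in>B. u b \<in> \<int>"
      then have "y \<in> H" using u B(4) by auto
      with y show False by simp
    qed
    then obtain b0 where b0: "b0 \<in> B" "u b0 \<notin> \<int>" by blast
    obtain \<phi> :: "'a \<Rightarrow> real" where \<phi>: "linear \<phi>" "\<forall>x\<in>B. \<phi> x = (if x = b0 then 1 else 0)"
      using linear_independent_extend[OF B(2), of "\<lambda>x. if x = b0 then 1 else (0::real)"] by (elim exE conjE) simp
    have ev: "\<phi> (\<Sum>b\<in>B. c b *\<^sub>R b) = c b0" for c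
    proof -
      have "\<phi> (\<Sum>b\<in>B. c b *\<^sub>R b) = (\<Sum>b\<in>B. c b * \<phi> b)"
        by (simp add: linear_sum[OF \<phi>(1)] linear_scale[OF \<phi>(1)])
      also have "\<dots> = (\<Sum>b\<in>B. if b = b0 then c b else 0)"
        using \<phi>(2) by (intro sum.cong) auto
      also have "\<dots> = c b0" using b0(1) B(1) by simp
      finally show ?thesis .
    qed
    have A: "\<phi> h \<in> \<int>" if hH: "h \<in> H" for h
    proof -
      obtain c where c: "h = (\<Sum>b\<in>B. c b *\<^sub>R b)" "\<forall>b\<in>B. c b \<in> \<int>" using Hc[OF hH] by (elim exE conjE)
      show "\<phi> h \<in> \<int>" using ev c b0(1) by simp
    qed
    have C: "\<phi> y \<notin> \<int>" using ev u b0 by simp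
    show ?thesis using \<phi>(1) A C by blast
  qed
qed

lemma dual_closed:
  fixes H :: "'a::euclidean_space set"
  assumes "closed H" "grp H" "y \<notin> H"
  shows "\<exists>\<phi>::'a \<Rightarrow> real. linear \<phi> \<and> (\<forall>h\<in>H. \<phi> h \<in> \<int>) \<and> \<phi> y \<notin> \<int>"
  using assms
proof (induction "dim H" arbitrary: H y rule: less_induct)
  case less
  note cl = less.prems(1) and g = less.prems(2) and y = less.prems(3)
  from line_or_discrete[OF cl g] show ?case
  proof
    assume "\<exists>w. w \<noteq> 0 \<and> (\<forall>r. r *\<^sub>R w \<in> H)"
    then obtain w where w: "w \<noteq> 0" "\<And>r. r *\<^sub>R w \<in> H" by blast
    define Q where "Q = proj w"
    have linQ: "linear Q" by (simp add: Q_def linear_proj)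
    define H' where "H' = H \<inter> {v. w \<bullet> v = 0}"
    have QH: "Q d \<in> H'" if "d \<in> H" for d
    proof -
      have "Q d \<in> H" using grp_diff[OF g that w(2)] by (simp add: Q_def proj_def)
      moreover have "w \<bullet> Q d = 0" using proj_orth[OF w(1), of d] by (simp add: Q_def inner_commute)
      ultimately show ?thesis by (simp add: H'_def)
    qed
    have cl': "closed H'" unfolding H'_def by (intro closed_Int cl closed_hyperplane)
    have g': "grp H'" using g by (auto simp: grp_def H'_def inner_add_right)
    have dimlt: "dim H' < dim H"
    proof (rule dim_less[where w=w])
      show "H' \<subseteq> span H" by (auto simp: H'_def intro: span_base)
      show "w \<in> span H" using w(2)[of 1] by (simp add: span_base)
      show "w \<noteq> 0" by fact
      show "\<forall>v\<in>H'. v \<bullet> w = 0" by (auto simp: H'_def inner_commute)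
    qed
    have "Q y \<notin> H'"
    proof
      assume "Q y \<in> H'"
      then have "Q y + ((y \<bullet> w) / (w \<bullet> w)) *\<^sub>R w \<in> H" using grp_add[OF g] w(2) by (simp add: H'_def)
      then show False using y proj_decomp[of y w] by (simp add: Q_def)
    qed
    then obtain \<phi>' :: "'a \<Rightarrow> real" where \<phi>': "linear \<phi>'" "\<forall>h\<in>H'. \<phi>' h \<in> \<int>" "\<phi>' (Q y) \<notin> \<int>"
      using less.hyps[OF dimlt cl' g'] by blast
    have L: "linear (\<phi>' \<circ> Q)" using linear_compose[OF linQ \<phi>'(1)] .
    have A: "(\<phi>' \<circ> Q) h \<in> \<int>" if "h \<in> H" for h using QH[OF that] \<phi>'(2) by simp
    have C: "(\<phi>' \<circ> Q) y \<notin> \<int>" using \<phi>'(3) by simp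
    show ?thesis using L A C by blast
  next
    assume "\<exists>e>0. \<forall>h\<in>H. h \<noteq> 0 \<longrightarrow> e \<le> norm h"
    then obtain e where e: "e > 0" "\<forall>h\<in>H. h \<noteq> 0 \<longrightarrow> e \<le> norm h" by blast
    show ?thesis by (rule dual_discrete[OF g e y])
  qed
qed

lemma lin_repr:
  fixes \<phi> :: "'a::euclidean_space \<Rightarrow> real"
  assumes "linear \<phi>"
  shows "\<phi> v = (\<Sum>b\<in>Basis. \<phi> b *\<^sub>R b) \<bullet> v"
proof -
  have "\<phi> v = \<phi> (\<Sum>b\<in>Basis. (v \<bullet> b) *\<^sub>R b)" by (simp add: euclidean_representation)
  also have "\<dots> = (\<Sum>b\<in>Basis. (v \<bullet> b) * \<phi> b)"
    by (simp add: linear_sum[OF assms] linear_scale[OF assms])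
  also have "\<dots> = (\<Sum>b\<in>Basis. \<phi> b * (b \<bullet> v))"
    by (intro sum.cong refl) (simp add: inner_commute)
  also have "\<dots> = (\<Sum>b\<in>Basis. \<phi> b *\<^sub>R b) \<bullet> v"
    by (simp add: inner_sum_left)
  finally show ?thesis .
qed

lemma grp_T: "closed_subgrp_T H \<Longrightarrow> grp H"
  by (simp add: closed_subgrp_T_def grp_def)

lemma axis_lat: "axis i 1 \<in> lat"
  by (simp add: lat_def axis_def)

lemma dual_lat:
  fixes H :: "(real^'n) set"
  assumes "closed_subgrp_T H" "y \<notin> H"
  shows "\<exists>m\<in>lat. (\<forall>h\<in>H. m \<bullet> h \<in> \<int>) \<and> m \<bullet> y \<notin> \<int>"
proof -
  have cl: "closed H" using assms(1) by (simp add: closed_subgrp_T_def)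
  obtain \<phi> :: "real^'n \<Rightarrow> real" where \<phi>: "linear \<phi>" "\<forall>h\<in>H. \<phi> h \<in> \<int>" "\<phi> y \<notin> \<int>"
    using dual_closed[OF cl grp_T[OF assms(1)] assms(2)] by blast
  define m where "m = (\<Sum>b\<in>Basis. \<phi> b *\<^sub>R b)"
  have mv: "\<phi> v = m \<bullet> v" for v unfolding m_def by (rule lin_repr[OF \<phi>(1)])
  have "m \<in> lat"
  proof -
    have "m $ i \<in> \<int>" for i
    proof -
      have "m $ i = m \<bullet> axis i 1" by (simp add: inner_axis)
      also have "\<dots> = \<phi> (axis i 1)" by (rule mv[symmetric])
      finally have "m $ i = \<phi> (axis i 1)" .
      moreover have "axis i 1 \<in> H" using axis_lat assms(1) unfolding closed_subgrp_T_def by blast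
      ultimately show ?thesis using \<phi>(2) by simp
    qed
    then show ?thesis by (simp add: lat_def)
  qed
  moreover have "\<forall>h\<in>H. m \<bullet> h \<in> \<int>" using \<phi>(2) by (simp add: mv)
  moreover have "m \<bullet> y \<notin> \<int>" using \<phi>(3) by (simp add: mv)
  ultimately show ?thesis by blast
qed

context
  fixes t :: "complex \<times> complex" and x :: "complex^'n" and x1 x2 :: "real^'n"
  assumes Dnz: "Re (fst t) * Im (snd t) - Im (fst t) * Re (snd t) \<noteq> 0"
    and xd: "\<And>i. x $ i = of_real (x1 $ i) * fst t + of_real (x2 $ i) * snd t"
begin

lemma indep2:
  assumes "of_real a * fst t + of_real b * snd t = 0"
  shows "a = 0 \<and> b = 0"
proof -
  define D where "D = Re (fst t) * Im (snd t) - Im (fst t) * Re (snd t)"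
  have r: "a * Re (fst t) + b * Re (snd t) = 0" using arg_cong[OF assms, of Re] by simp
  have i: "a * Im (fst t) + b * Im (snd t) = 0" using arg_cong[OF assms, of Im] by simp
  have "a * D = Im (snd t) * (a * Re (fst t) + b * Re (snd t)) - Re (snd t) * (a * Im (fst t) + b * Im (snd t))"
    by (simp add: D_def algebra_simps)
  then have "a * D = 0" using r i by simp
  moreover have "b * D = Re (fst t) * (a * Im (fst t) + b * Im (snd t)) - Im (fst t) * (a * Re (fst t) + b * Re (snd t))"
    by (simp add: D_def algebra_simps)
  then have "b * D = 0" using r i by simp
  ultimately show ?thesis using Dnz by (simp add: D_def)
qed

lemma mx: "(\<Sum>i\<in>UNIV. of_real (m $ i) * x $ i) = of_real (m \<bullet> x1) * fst t + of_real (m \<bullet> x2) * snd t"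
proof -
  have "(\<Sum>i\<in>UNIV. of_real (m $ i) * x $ i)
      = (\<Sum>i\<in>UNIV. of_real (m $ i * x1 $ i) * fst t + of_real (m $ i * x2 $ i) * snd t)"
    by (simp add: xd algebra_simps)
  also have "\<dots> = of_real (\<Sum>i\<in>UNIV. m $ i * x1 $ i) * fst t + of_real (\<Sum>i\<in>UNIV. m $ i * x2 $ i) * snd t"
    by (simp add: sum.distrib sum_distrib_right)
  finally show ?thesis by (simp add: inner_vec_def)
qed

lemma hom_iff_imp:
  assumes "closed_subgrp_T H" "in_Hom_hatH H t x"
  shows "x1 \<in> H \<and> x2 \<in> H"
proof (rule ccontr)
  assume "\<not> (x1 \<in> H \<and> x2 \<in> H)"
  then obtain y where y: "y \<notin> H" "y = x1 \<or> y = x2" by blast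
  obtain m where m: "m \<in> lat" "\<forall>h\<in>H. m \<bullet> h \<in> \<int>" "m \<bullet> y \<notin> \<int>"
    using dual_lat[OF assms(1) y(1)] by blast
  obtain p q where pq: "p \<in> \<int>" "q \<in> \<int>"
    "(\<Sum>i\<in>UNIV. of_real (m $ i) * x $ i) = of_real p * fst t + of_real q * snd t"
    using assms(2) m(1,2) unfolding in_Hom_hatH_def by blast
  have "of_real (m \<bullet> x1 - p) * fst t + of_real (m \<bullet> x2 - q) * snd t = 0"
    using pq(3) mx[of m] by (simp add: algebra_simps)
  then have "m \<bullet> x1 - p = 0 \<and> m \<bullet> x2 - q = 0" by (rule indep2)
  then show False using y m(3) pq(1,2) by auto
qed

lemma imp_hom:
  assumes "x1 \<in> H" "x2 \<in> H"
  shows "in_Hom_hatH H t x"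
  unfolding in_Hom_hatH_def
proof (intro ballI impI)
  fix m :: "real^'n" assume "m \<in> lat" "\<forall>h\<in>H. m \<bullet> h \<in> \<int>"
  then have "m \<bullet> x1 \<in> \<int>" "m \<bullet> x2 \<in> \<int>" using assms by auto
  then show "\<exists>p\<in>\<int>. \<exists>q\<in>\<int>. (\<Sum>i\<in>UNIV. of_real (m $ i) * x $ i) = of_real p * fst t + of_real q * snd t"
    using mx[of m] by blast
qed

end

lemma lie_comb:
  assumes "closed_subgrp_T2T K" "a \<in> lie_alg K" "b \<in> lie_alg K"
  shows "\<alpha> *\<^sub>R a + \<beta> *\<^sub>R b \<in> lie_alg K"
  unfolding lie_alg_def mem_Collect_eq
proof
  fix r :: real
  have "(r * \<alpha>) *\<^sub>R a \<in> K" "(r * \<beta>) *\<^sub>R b \<in> K" using assms(2,3) by (auto simp: lie_alg_def)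
  then have "(r * \<alpha>) *\<^sub>R a + (r * \<beta>) *\<^sub>R b \<in> K" using assms(1) by (auto simp: closed_subgrp_T2T_def)
  then show "r *\<^sub>R (\<alpha> *\<^sub>R a + \<beta> *\<^sub>R b) \<in> K" by (simp add: scaleR_add_right)
qed

lemma lie_in:
  assumes "a \<in> lie_alg K" shows "a \<in> K"
proof -
  have "1 *\<^sub>R a \<in> K" using assms unfolding lie_alg_def by blast
  then show ?thesis by simp
qed

context
  fixes t :: "complex \<times> complex" and x :: "complex^'n" and x1 x2 :: "real^'n"
  assumes Dnz: "Re (fst t) * Im (snd t) - Im (fst t) * Re (snd t) \<noteq> 0"
    and xd: "\<And>i. x $ i = of_real (x1 $ i) * fst t + of_real (x2 $ i) * snd t"
begin

lemma in_lie_xv: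
  assumes K: "closed_subgrp_T2T K" and L: "in_lie_cplx K t x"
  shows "(s, fst s *\<^sub>R x1 + snd s *\<^sub>R x2) \<in> K"
proof -
  obtain a b where ab: "a \<in> lie_alg K" "b \<in> lie_alg K"
    "fst t = Complex (fst (fst a)) (fst (fst b))" "snd t = Complex (snd (fst a)) (snd (fst b))"
    "\<forall>i. x $ i = Complex (snd a $ i) (snd b $ i)"
    using L unfolding in_lie_cplx_def by blast
  define R1 where "R1 = Re (fst t)"
  define R2 where "R2 = Re (snd t)"
  define I1 where "I1 = Im (fst t)"
  define I2 where "I2 = Im (snd t)"
  define D where "D = R1 * I2 - I1 * R2"
  have D: "D \<noteq> 0" using Dnz by (simp add: D_def R1_def R2_def I1_def I2_def)
  have fa: "fst a = (R1, R2)" using ab(3,4) by (simp add: R1_def R2_def prod_eq_iff)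
  have fb: "fst b = (I1, I2)" using ab(3,4) by (simp add: I1_def I2_def prod_eq_iff)
  have sa: "snd a $ i = x1 $ i * R1 + x2 $ i * R2" for i
  proof -
    have "snd a $ i = Re (x $ i)" using ab(5) by simp
    also have "\<dots> = x1 $ i * R1 + x2 $ i * R2" by (simp add: xd R1_def R2_def)
    finally show ?thesis .
  qed
  have sb: "snd b $ i = x1 $ i * I1 + x2 $ i * I2" for i
  proof -
    have "snd b $ i = Im (x $ i)" using ab(5) by simp
    also have "\<dots> = x1 $ i * I1 + x2 $ i * I2" by (simp add: xd I1_def I2_def)
    finally show ?thesis .
  qed
  obtain s1 s2 where s: "s = (s1, s2)" by (cases s)
  define \<alpha> where "\<alpha> = (s1 * I2 - s2 * I1) / D"
  define \<beta> where "\<beta> = (s2 * R1 - s1 * R2) / D"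
  have e1: "\<alpha> * R1 + \<beta> * I1 = s1"
  proof -
    have "\<alpha> * R1 + \<beta> * I1 = ((s1 * I2 - s2 * I1) * R1 + (s2 * R1 - s1 * R2) * I1) / D"
      by (simp add: \<alpha>_def \<beta>_def add_divide_distrib)
    also have "(s1 * I2 - s2 * I1) * R1 + (s2 * R1 - s1 * R2) * I1 = s1 * D"
      by (simp add: D_def algebra_simps)
    finally show ?thesis using D by simp
  qed
  have e2: "\<alpha> * R2 + \<beta> * I2 = s2"
  proof -
    have "\<alpha> * R2 + \<beta> * I2 = ((s1 * I2 - s2 * I1) * R2 + (s2 * R1 - s1 * R2) * I2) / D"
      by (simp add: \<alpha>_def \<beta>_def add_divide_distrib)
    also have "(s1 * I2 - s2 * I1) * R2 + (s2 * R1 - s1 * R2) * I2 = s2 * D"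
      by (simp add: D_def algebra_simps)
    finally show ?thesis using D by simp
  qed
  have eq: "(s, fst s *\<^sub>R x1 + snd s *\<^sub>R x2) = \<alpha> *\<^sub>R a + \<beta> *\<^sub>R b"
  proof (rule prod_eqI)
    have "fst (\<alpha> *\<^sub>R a + \<beta> *\<^sub>R b) = (\<alpha> * R1 + \<beta> * I1, \<alpha> * R2 + \<beta> * I2)"
      by (simp add: fa fb)
    then show "fst (s, fst s *\<^sub>R x1 + snd s *\<^sub>R x2) = fst (\<alpha> *\<^sub>R a + \<beta> *\<^sub>R b)"
      by (simp only: e1 e2 s fst_conv)
    show "snd (s, fst s *\<^sub>R x1 + snd s *\<^sub>R x2) = snd (\<alpha> *\<^sub>R a + \<beta> *\<^sub>R b)"
    proof (subst vec_eq_iff, rule allI)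
      fix i
      have l: "snd (s, fst s *\<^sub>R x1 + snd s *\<^sub>R x2) $ i = s1 * x1 $ i + s2 * x2 $ i" by (simp add: s)
      have r: "snd (\<alpha> *\<^sub>R a + \<beta> *\<^sub>R b) $ i = \<alpha> * snd a $ i + \<beta> * snd b $ i" by simp
      have "\<alpha> * snd a $ i + \<beta> * snd b $ i = x1 $ i * (\<alpha> * R1 + \<beta> * I1) + x2 $ i * (\<alpha> * R2 + \<beta> * I2)"
        unfolding sa sb by (simp add: algebra_simps)
      also have "\<dots> = s1 * x1 $ i + s2 * x2 $ i" unfolding e1 e2 by (simp add: mult.commute)
      finally show "snd (s, fst s *\<^sub>R x1 + snd s *\<^sub>R x2) $ i = snd (\<alpha> *\<^sub>R a + \<beta> *\<^sub>R b) $ i"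
        using l r by simp
    qed
  qed
  have "\<alpha> *\<^sub>R a + \<beta> *\<^sub>R b \<in> lie_alg K" by (rule lie_comb[OF K ab(1,2)])
  then show ?thesis unfolding eq by (rule lie_in)
qed

end

lemma T2T_add: "closed_subgrp_T2T K \<Longrightarrow> a \<in> K \<Longrightarrow> b \<in> K \<Longrightarrow> a + b \<in> K"
  and T2T_neg: "closed_subgrp_T2T K \<Longrightarrow> a \<in> K \<Longrightarrow> - a \<in> K"
  and T2T_lat: "closed_subgrp_T2T K \<Longrightarrow> m \<in> lat2 \<Longrightarrow> l \<in> lat \<Longrightarrow> (m, l) \<in> K"
  by (auto simp: closed_subgrp_T2T_def)

lemma zero_lat: "0 \<in> lat" and zero_lat2: "(0,0) \<in> lat2"
  by (auto simp: lat_def lat2_def)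

context
  fixes t :: "complex \<times> complex" and x :: "complex^'n" and x1 x2 :: "real^'n"
  assumes Dnz: "Re (fst t) * Im (snd t) - Im (fst t) * Re (snd t) \<noteq> 0"
    and xd: "\<And>i. x $ i = of_real (x1 $ i) * fst t + of_real (x2 $ i) * snd t"
begin

lemma Ta_sub_HK:
  assumes K: "closed_subgrp_T2T K" and L: "in_lie_cplx K t x" and u: "u \<in> Ta t x"
  shows "((0,0),u) \<in> K"
proof -
  define HK where "HK = {v. ((0::real,0::real),v) \<in> K}"
  have x1K: "x1 \<in> HK"
  proof -
    have "((1,0), x1) \<in> K" using in_lie_xv[OF Dnz xd K L, of "(1,0)"] by simp
    moreover have "((1,0), 0) \<in> K" using T2T_lat[OF K, of "(1,0)" 0] zero_lat by (simp add: lat2_def)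
    ultimately have "((1,0), x1) + - ((1,0), 0) \<in> K" using T2T_add[OF K] T2T_neg[OF K] by blast
    then show ?thesis by (simp add: HK_def)
  qed
  have x2K: "x2 \<in> HK"
  proof -
    have "((0,1), x2) \<in> K" using in_lie_xv[OF Dnz xd K L, of "(0,1)"] by simp
    moreover have "((0,1), 0) \<in> K" using T2T_lat[OF K, of "(0,1)" 0] zero_lat by (simp add: lat2_def)
    ultimately have "((0,1), x2) + - ((0,1), 0) \<in> K" using T2T_add[OF K] T2T_neg[OF K] by blast
    then show ?thesis by (simp add: HK_def)
  qed
  have "closed_subgrp_T HK"
    unfolding closed_subgrp_T_def
  proof (intro conjI ballI subsetI)
    have "closed ((\<lambda>v. ((0::real,0::real),v)) -` K)"
      using K unfolding closed_subgrp_T2T_def by (intro continuous_closed_vimage) (auto intro!: continuous_intros)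
    then show "closed HK" by (simp add: HK_def vimage_def)
    show "0 \<in> HK" using K by (simp add: HK_def closed_subgrp_T2T_def zero_prod_def)
    fix u v assume "u \<in> HK" "v \<in> HK"
    then have "((0,0),u) \<in> K" "((0,0),v) \<in> K" by (simp_all add: HK_def)
    then have "((0,0),u) + ((0,0),v) \<in> K" "- ((0,0),u) \<in> K" by (metis T2T_add[OF K], metis T2T_neg[OF K])
    then show "u + v \<in> HK" "- u \<in> HK" by (simp_all add: HK_def)
  next
    fix l :: "real^'n" assume "l \<in> lat"
    then show "l \<in> HK" using T2T_lat[OF K zero_lat2] by (simp add: HK_def)
  qed
  moreover have "in_Hom_hatH HK t x" by (rule imp_hom[OF Dnz xd x1K x2K])
  ultimately have "Ta t x \<subseteq> HK" unfolding Ta_def by blast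
  then show ?thesis using u by (auto simp: HK_def)
qed

lemma Ta_grp: "closed_subgrp_T (Ta t x)"
proof -
  let ?F = "{H. closed_subgrp_T H \<and> in_Hom_hatH H t x}"
  have F: "\<And>H. H \<in> ?F \<Longrightarrow> closed H \<and> 0 \<in> H \<and> (\<forall>u\<in>H. \<forall>v\<in>H. u + v \<in> H \<and> - u \<in> H) \<and> lat \<subseteq> H"
    by (simp add: closed_subgrp_T_def)
  have "closed (\<Inter>?F)" using F by (intro closed_Inter) blast
  moreover have "0 \<in> \<Inter>?F" using F by blast
  moreover have "\<forall>u\<in>\<Inter>?F. \<forall>v\<in>\<Inter>?F. u + v \<in> \<Inter>?F \<and> - u \<in> \<Inter>?F" using F by blast
  moreover have "lat \<subseteq> \<Inter>?F" using F by blast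
  ultimately have "closed_subgrp_T (\<Inter>?F)" unfolding closed_subgrp_T_def[of "\<Inter>?F"] by blast
  then show ?thesis by (simp add: Ta_def)
qed

lemma x12_Ta: "x1 \<in> Ta t x" "x2 \<in> Ta t x"
  using hom_iff_imp[OF Dnz xd] unfolding Ta_def by blast+

lemma xv_Ta: "m \<in> lat2 \<Longrightarrow> fst m *\<^sub>R x1 + snd m *\<^sub>R x2 \<in> Ta t x"
  using grp_T[OF Ta_grp] x12_Ta
  by (intro grp_add grp_int_mult) (auto simp: lat2_def)

lemma Ttx_xv: "(s, fst s *\<^sub>R x1 + snd s *\<^sub>R x2) \<in> Ttx t x"
  unfolding Ttx_def using in_lie_xv[OF Dnz xd] by blast

lemma Ttx_Ta: "u \<in> Ta t x \<Longrightarrow> ((0,0),u) \<in> Ttx t x"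
  unfolding Ttx_def using Ta_sub_HK by blast

lemma Ttx_sub:
  assumes g: "g \<in> Ttx t x"
  shows "snd g - (fst (fst g) *\<^sub>R x1 + snd (fst g) *\<^sub>R x2) \<in> Ta t x"
proof -
  define ll where "ll g = snd g - (fst (fst g) *\<^sub>R x1 + snd (fst g) *\<^sub>R x2)" for g :: "(real \<times> real) \<times> (real^'n)"
  define K0 where "K0 = ll -` Ta t x"
  have G: "grp (Ta t x)" by (rule grp_T[OF Ta_grp])
  have ladd: "ll (a + b) = ll a + ll b" for a b by (simp add: ll_def algebra_simps)
  have lneg: "ll (- a) = - ll a" for a by (simp add: ll_def algebra_simps)
  have "closed_subgrp_T2T K0"
    unfolding closed_subgrp_T2T_def
  proof (intro conjI ballI subsetI)
    show "closed K0" unfolding K0_def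
      using Ta_grp unfolding closed_subgrp_T_def ll_def
      by (intro continuous_closed_vimage) (auto intro!: continuous_intros)
    show "0 \<in> K0" using grp_zero[OF G] by (simp add: K0_def ll_def)
    fix u v assume "u \<in> K0" "v \<in> K0"
    then show "u + v \<in> K0" "- u \<in> K0" using grp_add[OF G] grp_neg[OF G] by (auto simp: K0_def ladd lneg)
  next
    fix k :: "(real \<times> real) \<times> (real^'n)" assume "k \<in> lat2 \<times> lat"
    then obtain m l where k: "k = (m, l)" "m \<in> lat2" "l \<in> lat" by blast
    have "l \<in> Ta t x" using Ta_grp k(3) by (auto simp: closed_subgrp_T_def)
    then have "l - (fst m *\<^sub>R x1 + snd m *\<^sub>R x2) \<in> Ta t x" using grp_diff[OF G _ xv_Ta[OF k(2)]] by blast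
    then show "k \<in> K0" by (simp add: K0_def ll_def k)
  qed
  moreover have "in_lie_cplx K0 t x"
  proof -
    define a where "a = ((Re (fst t), Re (snd t)), \<chi> i. Re (x $ i))"
    define b where "b = ((Im (fst t), Im (snd t)), \<chi> i. Im (x $ i))"
    have la: "ll (r *\<^sub>R a) = 0" for r
      by (simp add: ll_def a_def vec_eq_iff xd algebra_simps)
    have lb: "ll (r *\<^sub>R b) = 0" for r
      by (simp add: ll_def b_def vec_eq_iff xd algebra_simps)
    have A: "a \<in> lie_alg K0" using la grp_zero[OF G] by (simp add: lie_alg_def K0_def)
    have B: "b \<in> lie_alg K0" using lb grp_zero[OF G] by (simp add: lie_alg_def K0_def)
    have C1: "fst t = Complex (fst (fst a)) (fst (fst b))" by (simp add: a_def b_def complex_eq_iff)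
    have C2: "snd t = Complex (snd (fst a)) (snd (fst b))" by (simp add: a_def b_def complex_eq_iff)
    have C3: "\<forall>i. x $ i = Complex (snd a $ i) (snd b $ i)" by (simp add: a_def b_def complex_eq_iff)
    show ?thesis unfolding in_lie_cplx_def using A B C1 C2 C3 by blast
  qed
  ultimately have "Ttx t x \<subseteq> K0" unfolding Ttx_def by blast
  then show ?thesis using g by (auto simp: K0_def ll_def)
qed

end

lemma L2_top_topspace: "topspace (L2_top X) = L2 X"
proof -
  have "UNIV \<in> {{\<gamma>. \<gamma> ` K \<subseteq> U} | K U. compact K \<and> openin X U}"
    by (rule CollectI, rule exI[of _ "{}"], rule exI[of _ "{}"]) auto
  then have "\<Union> {{\<gamma>::real\<times>real \<Rightarrow> 'a. \<gamma> ` K \<subseteq> U} | K U. compact K \<and> openin X U} = UNIV" by blast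
  then show ?thesis by (simp add: L2_top_def)
qed

theorem mainTheorem16:
  fixes X :: "'a topology" and act :: "real^'n \<Rightarrow> 'a \<Rightarrow> 'a"
    and Y :: "'b topology" and actY :: "real^'n \<Rightarrow> 'b \<Rightarrow> 'b"
    and t :: "complex \<times> complex" and x :: "complex^'n"
  assumes "finite_T_CW X act" and "finite_T_CW Y actY"
    and "t \<in> Xplus"
  shows "homeomorphic_map (subtopology (L2_top X) (L2_fix X act t x))
            (subtopology X (X_fix X act t x)) ev0
       \<and> (\<forall>u::real^'n. \<forall>\<gamma>\<in>L2_fix X act t x.
            ev0 (L2_act act ((0, 0), u) \<gamma>) = act u (ev0 \<gamma>))
       \<and> (\<forall>f. continuous_map X Y f \<and> (\<forall>u. \<forall>p\<in>topspace X. f (act u p) = actY u (f p)) \<longrightarrow>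
            (\<forall>\<gamma>\<in>L2_fix X act t x. f \<circ> \<gamma> \<in> L2_fix Y actY t x \<and> ev0 (f \<circ> \<gamma>) = f (ev0 \<gamma>)))"
proof (intro conjI allI impI ballI)
  have TS: "T_space X act" using assms(1) by (simp add: finite_T_CW_def)
  have AC: "continuous_map (prod_topology euclidean X) X (\<lambda>(v, p). act v p)"
    using TS by (simp add: T_space_def)
  have A0: "\<And>p. p \<in> topspace X \<Longrightarrow> act 0 p = p" using TS by (simp add: T_space_def)
  have AA: "\<And>v w p. p \<in> topspace X \<Longrightarrow> act (v + w) p = act v (act w p)" using TS by (simp add: T_space_def)
  have AT: "\<And>v p. p \<in> topspace X \<Longrightarrow> act v p \<in> topspace X"
  proof -
    fix v :: "real^'n" and p assume "p \<in> topspace X"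
    then have "(v, p) \<in> topspace (prod_topology euclidean X)" by simp
    then show "act v p \<in> topspace X" using continuous_map_image_subset_topspace[OF AC] by force
  qed
  have tsp: "\<forall>z. \<exists>a b::real. z = of_real a * fst t + of_real b * snd t"
    and im: "Im (fst t / snd t) > 0" using assms(3) by (auto simp: Xplus_def)
  have Dnz: "Re (fst t) * Im (snd t) - Im (fst t) * Re (snd t) \<noteq> 0"
  proof
    assume "Re (fst t) * Im (snd t) - Im (fst t) * Re (snd t) = 0"
    then have "Im (fst t) * Re (snd t) - Re (fst t) * Im (snd t) = 0" by simp
    then show False using im by (simp add: Im_divide)
  qed
  have "\<forall>i. \<exists>ab::real \<times> real. x $ i = of_real (fst ab) * fst t + of_real (snd ab) * snd t"
    using tsp by simp
  then obtain AB where AB: "\<forall>i. x $ i = of_real (fst (AB i)) * fst t + of_real (snd (AB i)) * snd t"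
    by (rule choice[elim_format]) blast
  define x1 :: "real^'n" where "x1 = (\<chi> i. fst (AB i))"
  define x2 :: "real^'n" where "x2 = (\<chi> i. snd (AB i))"
  have xd: "\<And>i. x $ i = of_real (x1 $ i) * fst t + of_real (x2 $ i) * snd t"
    using AB by (simp add: x1_def x2_def)
  define xv where "xv s = fst s *\<^sub>R x1 + snd s *\<^sub>R x2" for s :: "real \<times> real"
  define \<psi> where "\<psi> p = (\<lambda>s. act (xv s) p)" for p
  define S where "S = L2_fix X act t x"
  define F where "F = X_fix X act t x"
  have G: "grp (Ta t x)" by (rule grp_T[OF Ta_grp[OF Dnz xd]])
  have Ttx_xv': "(s, xv s) \<in> Ttx t x" for s unfolding xv_def by (rule Ttx_xv[OF Dnz xd])
  have Ttx_sub': "snd g - xv (fst g) \<in> Ta t x" if "g \<in> Ttx t x" for g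
    unfolding xv_def by (rule Ttx_sub[OF Dnz xd that])
  have xv_Ta': "xv m \<in> Ta t x" if "m \<in> lat2" for m
    unfolding xv_def by (rule xv_Ta[OF Dnz xd that])
  have xv_add: "xv (a + b) = xv a + xv b" for a b by (simp add: xv_def algebra_simps)
  have xv_diff: "xv (a - b) = xv a - xv b" for a b by (simp add: xv_def algebra_simps)
  have xv0: "xv (0,0) = 0" by (simp add: xv_def)
  have SL: "S \<subseteq> L2 X" by (auto simp: S_def L2_fix_def)
  have FX: "F \<subseteq> topspace X" by (auto simp: F_def X_fix_def)
  have Sfix: "L2_act act g \<gamma> = \<gamma>" if "\<gamma> \<in> S" "g \<in> Ttx t x" for \<gamma> g
    using that by (simp add: S_def L2_fix_def)
  have Scont: "continuous_map euclidean X \<gamma>" if "\<gamma> \<in> S" for \<gamma>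
    using that by (simp add: S_def L2_fix_def L2_def)
  have Stop: "\<gamma> s \<in> topspace X" if "\<gamma> \<in> S" for \<gamma> s
    using continuous_map_image_subset_topspace[OF Scont[OF that]] by auto
  have P1: "\<gamma> s = act (xv s) (\<gamma> (0,0))" if "\<gamma> \<in> S" for \<gamma> s
  proof -
    have "L2_act act (s, xv s) \<gamma> s = \<gamma> s" using Sfix[OF that Ttx_xv'] by simp
    then show ?thesis by (simp add: L2_act_def zero_prod_def)
  qed
  have P2: "\<gamma> (0,0) \<in> F" if "\<gamma> \<in> S" for \<gamma>
  proof -
    have "act u (\<gamma> (0,0)) = \<gamma> (0,0)" if u: "u \<in> Ta t x" for u
    proof -
      have "L2_act act ((0,0),u) \<gamma> (0,0) = \<gamma> (0,0)"
        using Sfix[OF \<open>\<gamma> \<in> S\<close> Ttx_Ta[OF Dnz xd u]] by simp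
      then show ?thesis by (simp add: L2_act_def zero_prod_def)
    qed
    then show ?thesis using Stop[OF that] by (simp add: F_def X_fix_def)
  qed
  have P3: "\<psi> p \<in> S" if pF: "p \<in> F" for p
  proof -
    have pX: "p \<in> topspace X" using pF FX by blast
    have pfix: "act u p = p" if "u \<in> Ta t x" for u using pF that by (simp add: F_def X_fix_def)
    have cont: "continuous_map euclidean X (\<psi> p)"
    proof -
      have c1: "continuous_map euclidean (prod_topology euclidean X) (\<lambda>s. (xv s, p))"
      proof (subst continuous_map_pairwise, intro conjI)
        have "continuous_on UNIV xv" unfolding xv_def by (intro continuous_intros)
        then show "continuous_map euclidean euclidean (fst \<circ> (\<lambda>s. (xv s, p)))"
          by (simp add: o_def continuous_map_iff_continuous2)
        show "continuous_map euclidean X (snd \<circ> (\<lambda>s. (xv s, p)))"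
          using pX by (simp add: o_def)
      qed
      have "continuous_map euclidean X ((\<lambda>(v, p). act v p) \<circ> (\<lambda>s. (xv s, p)))"
        by (rule continuous_map_compose[OF c1 AC])
      then show ?thesis by (simp add: o_def \<psi>_def)
    qed
    have per: "\<psi> p (s + m) = \<psi> p s" if "m \<in> lat2" for s m
    proof -
      have "\<psi> p (s + m) = act (xv s) (act (xv m) p)" by (simp add: \<psi>_def xv_add AA[OF pX])
      also have "act (xv m) p = p" by (rule pfix[OF xv_Ta'[OF that]])
      finally show ?thesis by (simp add: \<psi>_def)
    qed
    have fixg: "L2_act act g (\<psi> p) = \<psi> p" if g: "g \<in> Ttx t x" for g
    proof
      fix s
      define w where "w = snd g - xv (fst g)"
      have w: "w \<in> Ta t x" unfolding w_def by (rule Ttx_sub'[OF g])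
      have "L2_act act g (\<psi> p) s = act (snd g) (act (xv (s - fst g)) p)" by (simp add: L2_act_def \<psi>_def)
      also have "\<dots> = act (snd g + xv (s - fst g)) p" by (simp add: AA[OF pX])
      also have "snd g + xv (s - fst g) = xv s + w" by (simp add: w_def xv_diff algebra_simps)
      also have "act (xv s + w) p = act (xv s) (act w p)" by (simp add: AA[OF pX])
      also have "act w p = p" by (rule pfix[OF w])
      finally show "L2_act act g (\<psi> p) s = \<psi> p s" by (simp add: \<psi>_def)
    qed
    show ?thesis using cont per fixg by (simp add: S_def L2_fix_def L2_def)
  qed
  have inv1: "\<psi> (ev0 \<gamma>) = \<gamma>" if gS: "\<gamma> \<in> S" for \<gamma>
  proof
    fix s
    have "\<psi> (ev0 \<gamma>) s = act (xv s) (\<gamma> (0,0))" by (simp add: \<psi>_def ev0_def)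
    also have "\<dots> = \<gamma> s" by (rule P1[OF gS, symmetric])
    finally show "\<psi> (ev0 \<gamma>) s = \<gamma> s" .
  qed
  have inv2: "ev0 (\<psi> p) = p" if "p \<in> F" for p
    using A0 FX that by (auto simp: \<psi>_def ev0_def xv0)
  define SB where "SB = {{\<gamma>::real\<times>real \<Rightarrow> 'a. \<gamma> ` K \<subseteq> U} | K U. compact K \<and> openin X U}"
  have L2T: "L2_top X = subtopology (topology_generated_by SB) (L2 X)" by (simp add: L2_top_def SB_def)
  have SBU: "\<Union>SB = UNIV"
  proof -
    have "UNIV \<in> SB" unfolding SB_def
      by (rule CollectI, rule exI[of _ "{}"], rule exI[of _ "{}"]) auto
    then show ?thesis by blast
  qed
  have topS: "topspace (subtopology (L2_top X) S) = S"
    using SL by (simp add: L2_top_topspace inf.absorb2)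
  have topF: "topspace (subtopology X F) = F" using FX by (simp add: inf.absorb2)
  have LS: "subtopology (L2_top X) S = subtopology (topology_generated_by SB) S"
    using SL by (simp add: L2T subtopology_subtopology inf.absorb2)
  have cont_ev: "continuous_map (subtopology (L2_top X) S) (subtopology X F) ev0"
  proof (subst continuous_map_in_subtopology, intro conjI)
    show "ev0 \<in> topspace (subtopology (L2_top X) S) \<rightarrow> F" using P2 topS by (auto simp: ev0_def)
    show "continuous_map (subtopology (L2_top X) S) X ev0"
      unfolding continuous_map_def
    proof (intro conjI allI impI)
      show "ev0 \<in> topspace (subtopology (L2_top X) S) \<rightarrow> topspace X"
        using P2 topS FX by (auto simp: ev0_def)
      fix U assume U: "openin X U"
      have "compact {(0::real,0::real)}" by simp
      then have "{\<gamma>. \<gamma> ` {(0,0)} \<subseteq> U} \<in> SB" unfolding SB_def using U by blast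
      then have "openin (topology_generated_by SB) {\<gamma>. \<gamma> ` {(0,0)} \<subseteq> U}" by (rule topology_generated_by_Basis)
      then have "openin (subtopology (topology_generated_by SB) S) (S \<inter> {\<gamma>. \<gamma> ` {(0,0)} \<subseteq> U})"
        by (rule openin_subtopology_Int2)
      moreover have "{\<gamma> \<in> topspace (subtopology (L2_top X) S). ev0 \<gamma> \<in> U} = S \<inter> {\<gamma>. \<gamma> ` {(0,0)} \<subseteq> U}"
        using topS by (auto simp: ev0_def)
      ultimately show "openin (subtopology (L2_top X) S) {\<gamma> \<in> topspace (subtopology (L2_top X) S). ev0 \<gamma> \<in> U}"
        using LS by simp
    qed
  qed
  have cont_psi: "continuous_map (subtopology X F) (subtopology (L2_top X) S) \<psi>"
  proof (subst LS, subst continuous_map_in_subtopology, intro conjI)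
    show "\<psi> \<in> topspace (subtopology X F) \<rightarrow> S" using P3 topF by auto
    show "continuous_map (subtopology X F) (topology_generated_by SB) \<psi>"
    proof (rule continuous_on_generated_topo)
      show "\<psi> ` topspace (subtopology X F) \<subseteq> \<Union> SB" using SBU by simp
      fix W assume "W \<in> SB"
      then obtain K V where W: "W = {\<gamma>. \<gamma> ` K \<subseteq> V}" and K: "compact K" and V: "openin X V"
        unfolding SB_def by blast
      let ?P = "\<psi> -` W \<inter> topspace (subtopology X F)"
      show "openin (subtopology X F) ?P"
      proof (subst openin_subopen, intro ballI)
        fix p assume pP: "p \<in> ?P"
        then have pF: "p \<in> F" and pW: "\<forall>s\<in>K. act (xv s) p \<in> V"
          using topF by (auto simp: W \<psi>_def)
        have pX: "p \<in> topspace X" using pF FX by blast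
        define Ow where "Ow = {z \<in> topspace (prod_topology euclidean X). (\<lambda>(v, p). act v p) z \<in> V}"
        have Ow: "openin (prod_topology euclidean X) Ow"
          unfolding Ow_def by (rule openin_continuous_map_preimage[OF AC V])
        have "compact (xv ` K)"
          by (rule compact_continuous_image[OF _ K]) (auto simp: xv_def intro!: continuous_intros)
        then have C: "compactin euclidean (xv ` K)" by (simp add: compactin_euclidean_iff)
        have sub: "xv ` K \<times> {p} \<subseteq> Ow" using pW pX by (auto simp: Ow_def)
        obtain U1 V1 where UV: "openin euclidean U1" "openin X V1" "xv ` K \<subseteq> U1" "p \<in> V1" "U1 \<times> V1 \<subseteq> Ow"
          using tube_lemma_left[OF Ow C pX sub] by blast
        show "\<exists>T. openin (subtopology X F) T \<and> p \<in> T \<and> T \<subseteq> ?P"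
        proof (intro exI conjI)
          show "openin (subtopology X F) (F \<inter> V1)" by (rule openin_subtopology_Int2[OF UV(2)])
          show "p \<in> F \<inter> V1" using pF UV(4) by blast
          show "F \<inter> V1 \<subseteq> ?P"
          proof
            fix q assume q: "q \<in> F \<inter> V1"
            have "act (xv s) q \<in> V" if "s \<in> K" for s
            proof -
              have "(xv s, q) \<in> Ow" using UV(3,5) q that by blast
              then show ?thesis by (simp add: Ow_def)
            qed
            then show "q \<in> ?P" using q topF by (auto simp: W \<psi>_def)
          qed
        qed
      qed
    qed
  qed
  show "homeomorphic_map (subtopology (L2_top X) (L2_fix X act t x)) (subtopology X (X_fix X act t x)) ev0"
  proof -
    have "homeomorphic_maps (subtopology (L2_top X) S) (subtopology X F) ev0 \<psi>"
      unfolding homeomorphic_maps_def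
    proof (intro conjI ballI)
      show "continuous_map (subtopology (L2_top X) S) (subtopology X F) ev0" by (rule cont_ev)
      show "continuous_map (subtopology X F) (subtopology (L2_top X) S) \<psi>" by (rule cont_psi)
      fix \<gamma> assume "\<gamma> \<in> topspace (subtopology (L2_top X) S)"
      then show "\<psi> (ev0 \<gamma>) = \<gamma>" using inv1 topS by simp
    next
      fix p assume "p \<in> topspace (subtopology X F)"
      then show "ev0 (\<psi> p) = p" using inv2 topF by simp
    qed
    then show ?thesis unfolding homeomorphic_map_maps S_def F_def by blast
  qed
next
  fix u :: "real^'n" and \<gamma> assume "\<gamma> \<in> L2_fix X act t x"
  show "ev0 (L2_act act ((0, 0), u) \<gamma>) = act u (ev0 \<gamma>)" by (simp add: ev0_def L2_act_def zero_prod_def)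
next
  fix f \<gamma>
  assume f: "continuous_map X Y f \<and> (\<forall>u. \<forall>p\<in>topspace X. f (act u p) = actY u (f p))"
    and \<gamma>: "\<gamma> \<in> L2_fix X act t x"
  have gc: "continuous_map euclidean X \<gamma>" and gp: "\<forall>s. \<forall>m\<in>lat2. \<gamma> (s + m) = \<gamma> s"
    and gf: "\<forall>g\<in>Ttx t x. L2_act act g \<gamma> = \<gamma>" using \<gamma> by (auto simp: L2_fix_def L2_def)
  have gt: "\<gamma> s \<in> topspace X" for s using continuous_map_image_subset_topspace[OF gc] by auto
  have "continuous_map euclidean Y (f \<circ> \<gamma>)" using continuous_map_compose[OF gc] f by blast
  moreover have "\<forall>s. \<forall>m\<in>lat2. (f \<circ> \<gamma>) (s + m) = (f \<circ> \<gamma>) s" using gp by simp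
  moreover have "\<forall>g\<in>Ttx t x. L2_act actY g (f \<circ> \<gamma>) = f \<circ> \<gamma>"
  proof
    fix g assume g: "g \<in> Ttx t x"
    show "L2_act actY g (f \<circ> \<gamma>) = f \<circ> \<gamma>"
    proof
      fix s
      have "L2_act actY g (f \<circ> \<gamma>) s = actY (snd g) (f (\<gamma> (s - fst g)))" by (simp add: L2_act_def)
      also have "\<dots> = f (act (snd g) (\<gamma> (s - fst g)))" using f gt by simp
      also have "\<dots> = f (L2_act act g \<gamma> s)" by (simp add: L2_act_def)
      also have "\<dots> = f (\<gamma> s)" using gf g by simp
      finally show "L2_act actY g (f \<circ> \<gamma>) s = (f \<circ> \<gamma>) s" by simp
    qed
  qed
  ultimately show "f \<circ> \<gamma> \<in> L2_fix Y actY t x" by (simp add: L2_fix_def L2_def)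
  show "ev0 (f \<circ> \<gamma>) = f (ev0 \<gamma>)" by (simp add: ev0_def)
qed

end
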